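(* There exist universal constants $c_1,c,p>0$ such that the following holds. Let $H\ge2$, $A\ge2$, $0<\epsilon<\frac1{48\sqrt8}$ and $S\ge c_1$. Then for any algorithm and any $n\le cH^2SA/\epsilon^2$, there exists a non-stationary $H$-horizon tabular MDP with $S$ states and $A$ actions such that, when the algorithm uses $n$ episodes of data from this MDP, with probability at least $p$ it outputs a policy $\widehat\pi$ with $v^\star-v^{\widehat\pi}\ge\epsilon$.
   Context: A finite-horizon tabular MDP has finite state/action sets, horizon $H$, rewards in $[0,1]$, transition kernels $P_t$, initial distribution $d_1$. For a policy $\pi$, $v^\pi=\mathbb E^\pi[\sum_{t=1}^Hr_t]$ with $s_1\sim d_1$, and $v^\star=\sup_\pi v^\pi$. The algorithm may collect its $n$ episodes with any data-collection strategy. *)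

theory Defs
  imports "HOL-Probability.Probability"
begin

text \<open>States are 0..S-1, actions 0..A-1, time steps
  are indexed 0..H-1 (corresponding to 1..H in the paper).\<close>

record mdp =
  init :: "nat pmf"
  trans :: "nat \<Rightarrow> nat \<Rightarrow> nat \<Rightarrow> nat pmf"
  rew :: "nat \<Rightarrow> nat \<Rightarrow> nat \<Rightarrow> real pmf"

definition valid_mdp :: "nat \<Rightarrow> nat \<Rightarrow> nat \<Rightarrow> mdp \<Rightarrow> bool" where
  "valid_mdp S A H M \<longleftrightarrow>
     set_pmf (init M) \<subseteq> {..<S} \<and>
     (\<forall>t<H. \<forall>s<S. \<forall>a<A. set_pmf (trans M t s a) \<subseteq> {..<S}
                      \<and> set_pmf (rew M t s a) \<subseteq> {0..1})"

text \<open>A step of a trajectory: (state, action, observed reward).\<close>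
type_synonym traj = "(nat \<times> nat \<times> real) list"

text \<open>Non-stationary (Markov, possibly randomized) policy: time, state to action distribution.\<close>
type_synonym policy = "nat \<Rightarrow> nat \<Rightarrow> nat pmf"

definition valid_policy :: "nat \<Rightarrow> nat \<Rightarrow> policy \<Rightarrow> bool" where
  "valid_policy A H \<pi> \<longleftrightarrow> (\<forall>t<H. \<forall>s. set_pmf (\<pi> t s) \<subseteq> {..<A})"

primrec run_steps ::
  "mdp \<Rightarrow> (traj \<Rightarrow> nat \<Rightarrow> nat \<Rightarrow> nat pmf) \<Rightarrow> nat \<Rightarrow> nat \<Rightarrow> nat \<Rightarrow> traj \<Rightarrow> traj pmf" where
  "run_steps M act t 0 s tr = return_pmf tr"
| "run_steps M act t (Suc k) s tr =
     do { a \<leftarrow> act tr t s;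
          r \<leftarrow> rew M t s a;
          s' \<leftarrow> trans M t s a;
          run_steps M act (Suc t) k s' (tr @ [(s, a, r)]) }"

definition episode :: "mdp \<Rightarrow> nat \<Rightarrow> (traj \<Rightarrow> nat \<Rightarrow> nat \<Rightarrow> nat pmf) \<Rightarrow> traj pmf" where
  "episode M H act = do { s \<leftarrow> init M; run_steps M act 0 H s [] }"

definition total_reward :: "traj \<Rightarrow> real" where
  "total_reward tr = sum_list (map (\<lambda>(s, a, r). r) tr)"

definition pol_value :: "mdp \<Rightarrow> nat \<Rightarrow> policy \<Rightarrow> real" where
  "pol_value M H \<pi> = measure_pmf.expectation (episode M H (\<lambda>tr t s. \<pi> t s)) total_reward"

definition vstar :: "mdp \<Rightarrow> nat \<Rightarrow> nat \<Rightarrow> real" where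
  "vstar M A H = (SUP \<pi> \<in> {\<pi>. valid_policy A H \<pi>}. pol_value M H \<pi>)"

text \<open>An arbitrary (randomized, adaptive) algorithm: during data collection it
  chooses actions based on all previously completed episodes, the current partial
  trajectory, time and current state; after collecting data it outputs a
  (random) policy.\<close>
record algorithm =
  alg_act :: "traj list \<Rightarrow> traj \<Rightarrow> nat \<Rightarrow> nat \<Rightarrow> nat pmf"
  alg_out :: "traj list \<Rightarrow> policy pmf"

definition valid_alg :: "nat \<Rightarrow> nat \<Rightarrow> algorithm \<Rightarrow> bool" where
  "valid_alg A H alg \<longleftrightarrow>
     (\<forall>D tr t s. set_pmf (alg_act alg D tr t s) \<subseteq> {..<A}) \<and>
     (\<forall>D. \<forall>\<pi>\<in>set_pmf (alg_out alg D). valid_policy A H \<pi>)"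

primrec collect :: "mdp \<Rightarrow> nat \<Rightarrow> algorithm \<Rightarrow> nat \<Rightarrow> traj list pmf" where
  "collect M H alg 0 = return_pmf []"
| "collect M H alg (Suc k) =
     do { D \<leftarrow> collect M H alg k;
          tr \<leftarrow> episode M H (alg_act alg D);
          return_pmf (D @ [tr]) }"

definition alg_output :: "mdp \<Rightarrow> nat \<Rightarrow> algorithm \<Rightarrow> nat \<Rightarrow> policy pmf" where
  "alg_output M H alg n = collect M H alg n \<bind> alg_out alg"

end

theory Submission
  imports Defs
begin


lemma integral_bind_pmf_bdd:
  fixes f :: "'b \<Rightarrow> real"
  assumes f0: "\<And>y. 0 \<le> f y" and fB: "\<And>y. f y \<le> B"
  shows "measure_pmf.expectation (bind_pmf M N) f =
         measure_pmf.expectation M (\<lambda>x. measure_pmf.expectation (N x) f)"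
proof -
  have intf: "integrable (measure_pmf P) f" for P :: "'b pmf"
    by (rule measure_pmf.integrable_const_bound[where B=B]) (use f0 fB in auto)
  have g0: "0 \<le> measure_pmf.expectation (N x) f" for x
    by (rule integral_nonneg_AE) (use f0 in auto)
  have gB: "measure_pmf.expectation (N x) f \<le> B" for x
  proof -
    have "measure_pmf.expectation (N x) f \<le> measure_pmf.expectation (N x) (\<lambda>_. B)"
      by (rule integral_mono) (use intf fB in auto)
    then show ?thesis by simp
  qed
  have intg: "integrable (measure_pmf M) (\<lambda>x. measure_pmf.expectation (N x) f)"
    by (rule measure_pmf.integrable_const_bound[where B=B]) (use g0 gB in auto)
  have "ennreal (measure_pmf.expectation (bind_pmf M N) f) = (\<integral>\<^sup>+y. f y \<partial>bind_pmf M N)"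
    by (rule nn_integral_eq_integral[symmetric]) (use intf f0 in auto)
  also have "\<dots> = (\<integral>\<^sup>+x. \<integral>\<^sup>+y. f y \<partial>N x \<partial>M)" by simp
  also have "\<dots> = (\<integral>\<^sup>+x. ennreal (measure_pmf.expectation (N x) f) \<partial>M)"
    by (intro nn_integral_cong nn_integral_eq_integral) (use intf f0 in auto)
  also have "\<dots> = ennreal (measure_pmf.expectation M (\<lambda>x. measure_pmf.expectation (N x) f))"
    by (rule nn_integral_eq_integral) (use intg g0 in auto)
  finally show ?thesis
    by (subst (asm) ennreal_inj) (auto intro!: integral_nonneg_AE simp: f0 g0)
qed

lemma pmf_bind_single:
  assumes "\<And>x'. x' \<in> set_pmf p \<Longrightarrow> x' \<noteq> x \<Longrightarrow> y \<notin> set_pmf (K x')"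
  shows "pmf (bind_pmf p K) y = pmf p x * pmf (K x) y"
proof -
  have "pmf (bind_pmf p K) y = measure_pmf.expectation p (\<lambda>x'. indicator {x} x' * pmf (K x) y)"
    unfolding pmf_bind
    by (rule integral_cong_AE) (use assms in \<open>auto simp: AE_measure_pmf_iff set_pmf_eq indicator_def\<close>)
  also have "\<dots> = pmf p x * pmf (K x) y"
    by (simp add: measure_pmf_single)
  finally show ?thesis .
qed

definition kl :: "'a pmf \<Rightarrow> 'a pmf \<Rightarrow> real" where
  "kl q p = (\<Sum>x\<in>set_pmf q. pmf q x * ln (pmf q x / pmf p x))"

lemma kl_self: "kl p p = 0"
  unfolding kl_def by (intro sum.neutral) (auto simp: set_pmf_iff)

lemma pos_of_set: "x \<in> set_pmf p \<Longrightarrow> 0 < pmf p x"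
  by (simp add: pmf_positive)

lemma kl_bind:
  assumes fin_q: "finite (set_pmf q)" and sub: "set_pmf q \<subseteq> set_pmf p"
    and finL: "\<And>x. x \<in> set_pmf q \<Longrightarrow> finite (set_pmf (L x))"
    and subL: "\<And>x. x \<in> set_pmf q \<Longrightarrow> set_pmf (L x) \<subseteq> set_pmf (K x)"
    and dec: "\<And>x y. x \<in> set_pmf p \<Longrightarrow> y \<in> set_pmf (K x) \<Longrightarrow> d y = x"
  shows "kl (bind_pmf q L) (bind_pmf p K) = kl q p + (\<Sum>x\<in>set_pmf q. pmf q x * kl (L x) (K x))"
proof -
  let ?F = "\<lambda>y. pmf (bind_pmf q L) y * ln (pmf (bind_pmf q L) y / pmf (bind_pmf p K) y)"
  have decL: "d y = x" if "x \<in> set_pmf q" "y \<in> set_pmf (L x)" for x y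
    using dec[of x y] that sub subL by auto
  have pq: "pmf (bind_pmf q L) y = pmf q x * pmf (L x) y" if "x \<in> set_pmf q" "y \<in> set_pmf (L x)" for x y
    by (rule pmf_bind_single) (use decL that in metis)
  have pp: "pmf (bind_pmf p K) y = pmf p x * pmf (K x) y" if "x \<in> set_pmf q" "y \<in> set_pmf (L x)" for x y
    by (rule pmf_bind_single) (use dec that sub subL in \<open>metis subsetD\<close>)
  have "kl (bind_pmf q L) (bind_pmf p K) = sum ?F (\<Union>x\<in>set_pmf q. set_pmf (L x))"
    unfolding kl_def by simp
  also have "\<dots> = (\<Sum>x\<in>set_pmf q. sum ?F (set_pmf (L x)))"
    by (rule sum.UNION_disjoint) (use fin_q finL decL in \<open>auto; metis\<close>)+
  also have "\<dots> = (\<Sum>x\<in>set_pmf q. pmf q x * ln (pmf q x / pmf p x) + pmf q x * kl (L x) (K x))"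
  proof (rule sum.cong[OF refl])
    fix x assume x: "x \<in> set_pmf q"
    have qx: "0 < pmf q x" and px: "0 < pmf p x" using x sub by (auto simp: pmf_positive)
    have "sum ?F (set_pmf (L x)) = (\<Sum>y\<in>set_pmf (L x). pmf (L x) y * (pmf q x * ln (pmf q x / pmf p x))
          + pmf q x * (pmf (L x) y * ln (pmf (L x) y / pmf (K x) y)))"
    proof (rule sum.cong[OF refl])
      fix y assume y: "y \<in> set_pmf (L x)"
      have ly: "0 < pmf (L x) y" and ky: "0 < pmf (K x) y" using y subL[OF x] by (auto simp: pmf_positive)
      have "ln (pmf q x * pmf (L x) y / (pmf p x * pmf (K x) y)) = ln (pmf q x / pmf p x) + ln (pmf (L x) y / pmf (K x) y)"
        using qx px ly ky by (simp add: ln_mult ln_div)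
      then show "?F y = pmf (L x) y * (pmf q x * ln (pmf q x / pmf p x))
          + pmf q x * (pmf (L x) y * ln (pmf (L x) y / pmf (K x) y))"
        using pq[OF x y] pp[OF x y] by (simp add: algebra_simps)
    qed
    also have "\<dots> = (\<Sum>y\<in>set_pmf (L x). pmf (L x) y) * (pmf q x * ln (pmf q x / pmf p x)) + pmf q x * kl (L x) (K x)"
      by (simp add: sum.distrib sum_distrib_left sum_distrib_right kl_def)
    also have "(\<Sum>y\<in>set_pmf (L x). pmf (L x) y) = 1"
      by (rule sum_pmf_eq_1) (use finL x in auto)
    finally show "sum ?F (set_pmf (L x)) = pmf q x * ln (pmf q x / pmf p x) + pmf q x * kl (L x) (K x)" by simp
  qed
  also have "\<dots> = kl q p + (\<Sum>x\<in>set_pmf q. pmf q x * kl (L x) (K x))"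
    by (simp add: sum.distrib kl_def)
  finally show ?thesis .
qed


lemma ln_ratio_bound:
  fixes p q :: real assumes "0 < p" "0 \<le> q"
  shows "2 * q - 2 * (sqrt p * sqrt q) \<le> q * ln (q / p)"
proof (cases "q = 0")
  case True then show ?thesis by simp
next
  case False
  then have q: "0 < q" using assms by simp
  define u where "u = sqrt p" define v where "v = sqrt q"
  have u: "0 < u" and v: "0 < v" using assms q by (auto simp: u_def v_def)
  have pu: "p = u^2" and qv: "q = v^2" using assms by (auto simp: u_def v_def)
  have "ln (u / v) \<le> u / v - 1" by (rule ln_le_minus_one) (use u v in simp)
  moreover have "ln (q / p) = - 2 * ln (u / v)"
    using u v by (simp add: pu qv ln_div power2_eq_square ln_mult)
  ultimately have "ln (q / p) \<ge> - 2 * (u / v - 1)" by simp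
  then have "q * ln (q / p) \<ge> q * (- 2 * (u / v - 1))" using q by (simp add: mult_left_mono)
  also have "q * (- 2 * (u / v - 1)) = 2 * q - 2 * (u * v)"
    using v by (simp add: qv field_simps power2_eq_square)
  finally show ?thesis by (simp add: u_def v_def)
qed

lemma kl_tv:
  fixes f :: "'a \<Rightarrow> real"
  assumes fin: "finite (set_pmf p)" and sub: "set_pmf q \<subseteq> set_pmf p"
    and f0: "\<And>x. 0 \<le> f x" and f1: "\<And>x. f x \<le> 1"
  shows "measure_pmf.expectation p f \<le> measure_pmf.expectation q f + 2 * sqrt (kl q p)"
proof -
  let ?U = "set_pmf p"
  define a where "a x = \<bar>sqrt (pmf p x) - sqrt (pmf q x)\<bar>" for x
  define b where "b x = sqrt (pmf p x) + sqrt (pmf q x)" for x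
  have Ep: "measure_pmf.expectation p f = (\<Sum>x\<in>?U. f x * pmf p x)"
    by (rule integral_measure_pmf_real) (use fin in auto)
  have Eq: "measure_pmf.expectation q f = (\<Sum>x\<in>?U. f x * pmf q x)"
    by (rule integral_measure_pmf_real) (use fin sub in auto)
  have sp: "(\<Sum>x\<in>?U. pmf p x) = 1" by (rule sum_pmf_eq_1) (use fin in auto)
  have sq: "(\<Sum>x\<in>?U. pmf q x) = 1" by (rule sum_pmf_eq_1) (use fin sub in auto)
  have "measure_pmf.expectation p f - measure_pmf.expectation q f = (\<Sum>x\<in>?U. f x * (pmf p x - pmf q x))"
    by (simp add: Ep Eq sum_subtractf[symmetric] algebra_simps)
  also have "\<dots> \<le> (\<Sum>x\<in>?U. a x * b x)"
  proof (rule sum_mono)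
    fix x
    have "a x * b x = \<bar>(sqrt (pmf p x) - sqrt (pmf q x)) * (sqrt (pmf p x) + sqrt (pmf q x))\<bar>"
      by (simp add: a_def b_def abs_mult)
    also have "\<dots> = \<bar>pmf p x - pmf q x\<bar>"
      by (simp add: algebra_simps power2_eq_square[symmetric])
    finally have ab: "a x * b x = \<bar>pmf p x - pmf q x\<bar>" .
    have "f x * (pmf p x - pmf q x) \<le> \<bar>f x * (pmf p x - pmf q x)\<bar>" by simp
    also have "\<dots> \<le> \<bar>pmf p x - pmf q x\<bar>"
      using f0[of x] f1[of x] by (simp add: abs_mult mult_left_le_one_le)
    finally show "f x * (pmf p x - pmf q x) \<le> a x * b x" by (simp add: ab)
  qed
  finally have d1: "measure_pmf.expectation p f - measure_pmf.expectation q f \<le> (\<Sum>x\<in>?U. a x * b x)" .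
  have bsum: "(\<Sum>x\<in>?U. (b x)^2) \<le> 4"
  proof -
    have "(\<Sum>x\<in>?U. (b x)^2) \<le> (\<Sum>x\<in>?U. 2 * (pmf p x + pmf q x))"
    proof (rule sum_mono)
      fix x
      have "(b x)^2 = pmf p x + pmf q x + 2 * (sqrt (pmf p x) * sqrt (pmf q x))"
        by (simp add: b_def power2_sum)
      moreover have "2 * (sqrt (pmf p x) * sqrt (pmf q x)) \<le> pmf p x + pmf q x"
        using sum_squares_bound[of "sqrt (pmf p x)" "sqrt (pmf q x)"] by simp
      ultimately show "(b x)^2 \<le> 2 * (pmf p x + pmf q x)" by simp
    qed
    also have "\<dots> = 4" by (simp add: sum.distrib sum_distrib_left[symmetric] sp sq)
    finally show ?thesis .
  qed
  have klU: "kl q p = (\<Sum>x\<in>?U. pmf q x * ln (pmf q x / pmf p x))"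
    unfolding kl_def by (rule sum.mono_neutral_left) (use fin sub in \<open>auto simp: set_pmf_iff\<close>)
  have asum: "(\<Sum>x\<in>?U. (a x)^2) \<le> kl q p"
  proof -
    have "(\<Sum>x\<in>?U. (a x)^2) = (\<Sum>x\<in>?U. pmf p x + pmf q x - 2 * (sqrt (pmf p x) * sqrt (pmf q x)))"
      by (rule sum.cong[OF refl]) (simp add: a_def power2_diff)
    also have "\<dots> = (\<Sum>x\<in>?U. 2 * pmf q x - 2 * (sqrt (pmf p x) * sqrt (pmf q x)))"
      by (simp add: sum.distrib sum_subtractf sp sq sum_distrib_left[symmetric])
    also have "\<dots> \<le> (\<Sum>x\<in>?U. pmf q x * ln (pmf q x / pmf p x))"
      by (rule sum_mono, rule ln_ratio_bound) (auto simp: pmf_positive)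
    finally show ?thesis by (simp add: klU)
  qed
  have kl0: "0 \<le> kl q p" using asum sum_nonneg[of ?U "\<lambda>x. (a x)^2"] by simp
  have "(\<Sum>x\<in>?U. a x * b x)^2 \<le> (\<Sum>x\<in>?U. (a x)^2) * (\<Sum>x\<in>?U. (b x)^2)"
    by (rule Cauchy_Schwarz_ineq_sum)
  also have "\<dots> \<le> kl q p * 4"
    using asum bsum kl0 by (intro mult_mono) (auto intro: sum_nonneg)
  finally have "(\<Sum>x\<in>?U. a x * b x)^2 \<le> (2 * sqrt (kl q p))^2"
    using kl0 by (simp add: power_mult_distrib)
  then have "(\<Sum>x\<in>?U. a x * b x) \<le> 2 * sqrt (kl q p)"
    by (rule power2_le_imp_le) (use kl0 in simp)
  with d1 show ?thesis by simp
qed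



definition tb :: "real \<Rightarrow> nat pmf" where
  "tb \<beta> = map_pmf (\<lambda>b. if b then 1 else 0) (bernoulli_pmf \<beta>)"

definition mdpB :: "nat \<Rightarrow> (nat \<Rightarrow> nat \<Rightarrow> real) \<Rightarrow> mdp" where
  "mdpB S \<beta> = \<lparr> init = pmf_of_set {2..<S},
     trans = (\<lambda>t s a. if t = 0 \<and> 2 \<le> s then tb (\<beta> s a) else return_pmf (if s = 1 then 1 else 0)),
     rew = (\<lambda>t s a. return_pmf (if s = 1 then 1 else 0)) \<rparr>"

lemma set_tb: "0 < \<beta> \<Longrightarrow> \<beta> < 1 \<Longrightarrow> set_pmf (tb \<beta>) = {0, 1}"
  by (auto simp: tb_def)

lemma finite_set_tb: "finite (set_pmf (tb \<beta>))"
  by (simp add: tb_def)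

lemma mdpB_simps [simp]:
  "init (mdpB S \<beta>) = pmf_of_set {2..<S}"
  "trans (mdpB S \<beta>) t s a = (if t = 0 \<and> 2 \<le> s then tb (\<beta> s a) else return_pmf (if s = 1 then 1 else 0))"
  "rew (mdpB S \<beta>) t s a = return_pmf (if s = 1 then 1 else 0)"
  by (simp_all add: mdpB_def)

lemma run_steps_set_eq:
  assumes "\<And>t s a. set_pmf (trans M1 t s a) = set_pmf (trans M2 t s a)"
      and "\<And>t s a. rew M1 t s a = rew M2 t s a"
  shows "set_pmf (run_steps M1 act t k s tr) = set_pmf (run_steps M2 act t k s tr)"
  by (induction k arbitrary: t s tr) (simp_all add: assms)

lemma run_steps_finite:
  assumes "\<And>tr t s. finite (set_pmf (act tr t s))"
      and "\<And>t s a. finite (set_pmf (trans M t s a))"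
      and "\<And>t s a. finite (set_pmf (rew M t s a))"
  shows "finite (set_pmf (run_steps M act t k s tr))"
  by (induction k arbitrary: t s tr) (simp_all add: assms)

lemma run_steps_shape:
  "y \<in> set_pmf (run_steps M act t k s tr) \<Longrightarrow>
     \<exists>z. y = tr @ z \<and> length z = k \<and> (0 < k \<longrightarrow> fst (z ! 0) = s)"
proof (induction k arbitrary: t s tr)
  case 0 then show ?case by simp
next
  case (Suc k)
  then obtain a r s' where "y \<in> set_pmf (run_steps M act (Suc t) k s' (tr @ [(s, a, r)]))"
    by auto
  from Suc.IH[OF this] obtain z where "y = (tr @ [(s, a, r)]) @ z" "length z = k" by blast
  then show ?case by (intro exI[of _ "(s,a,r) # z"]) auto
qed

lemma run_steps_mdpB_Suc:
  "run_steps (mdpB S \<beta>) act (Suc t) k s tr = run_steps (mdpB S \<beta>') act (Suc t) k s tr"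
  by (induction k arbitrary: t s tr) simp_all

definition goodB :: "(nat \<Rightarrow> nat \<Rightarrow> real) \<Rightarrow> bool" where
  "goodB \<beta> \<longleftrightarrow> (\<forall>s a. 0 < \<beta> s a \<and> \<beta> s a < 1)"

lemma set_trans_mdpB:
  assumes "goodB \<beta>" "goodB \<beta>'"
  shows "set_pmf (trans (mdpB S \<beta>) t s a) = set_pmf (trans (mdpB S \<beta>') t s a)"
  using assms by (simp add: goodB_def set_tb)

lemma episode_set_eq:
  assumes "goodB \<beta>" "goodB \<beta>'"
  shows "set_pmf (episode (mdpB S \<beta>) H act) = set_pmf (episode (mdpB S \<beta>') H act)"
  unfolding episode_def
  using run_steps_set_eq[of "mdpB S \<beta>" "mdpB S \<beta>'", OF set_trans_mdpB[OF assms]]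
  by simp

lemma episode_finite:
  assumes "\<And>tr t s. finite (set_pmf (act tr t s))" "2 < S"
  shows "finite (set_pmf (episode (mdpB S \<beta>) H act))"
  unfolding episode_def using assms
  by (simp add: run_steps_finite finite_set_tb)

lemma collect_set_eq:
  assumes "goodB \<beta>" "goodB \<beta>'"
  shows "set_pmf (collect (mdpB S \<beta>) H alg n) = set_pmf (collect (mdpB S \<beta>') H alg n)"
  by (induction n) (simp_all add: episode_set_eq[OF assms])

lemma collect_finite:
  assumes "valid_alg A H alg" "2 < S"
  shows "finite (set_pmf (collect (mdpB S \<beta>) H alg n))"
proof -
  have fa: "finite (set_pmf (alg_act alg D tr t s))" for D tr t s
    using assms(1) unfolding valid_alg_def by (meson finite_lessThan finite_subset)
  show ?thesis
    by (induction n) (simp_all add: episode_finite[OF fa assms(2)])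
qed


definition Jd :: "nat \<Rightarrow> (nat \<Rightarrow> nat \<Rightarrow> real) \<Rightarrow> (traj \<Rightarrow> nat \<Rightarrow> nat \<Rightarrow> nat pmf) \<Rightarrow> (nat \<times> nat \<times> nat) pmf" where
  "Jd S \<beta> act = pmf_of_set {2..<S} \<bind> (\<lambda>s. act [] 0 s \<bind> (\<lambda>a. map_pmf (\<lambda>s'. (s, a, s')) (tb (\<beta> s a))))"

definition Rd :: "nat \<Rightarrow> (traj \<Rightarrow> nat \<Rightarrow> nat \<Rightarrow> nat pmf) \<Rightarrow> nat \<Rightarrow> nat \<times> nat \<times> nat \<Rightarrow> traj pmf" where
  "Rd S act H' x = (case x of (s, a, s') \<Rightarrow> run_steps (mdpB S (\<lambda>_ _. 1/2)) act (Suc 0) H' s' [(s, a, 0)])"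

lemma episode_decomp:
  assumes "2 < S"
  shows "episode (mdpB S \<beta>) (Suc H') act = Jd S \<beta> act \<bind> Rd S act H'"
proof -
  have "episode (mdpB S \<beta>) (Suc H') act =
        pmf_of_set {2..<S} \<bind> (\<lambda>s. act [] 0 s \<bind> (\<lambda>a. tb (\<beta> s a) \<bind> (\<lambda>s'. Rd S act H' (s, a, s'))))"
    unfolding episode_def mdpB_simps(1)
    apply (rule bind_pmf_cong[OF refl])
    using assms
    by (auto simp: bind_return_pmf Rd_def run_steps_mdpB_Suc[of S \<beta> _ _ _ _ _ "\<lambda>_ _. 1/2"])
  also have "\<dots> = Jd S \<beta> act \<bind> Rd S act H'"
    by (simp add: Jd_def bind_assoc_pmf bind_map_pmf)
  finally show ?thesis .
qed


lemma kl_map: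
  assumes "finite (set_pmf q)" "set_pmf q \<subseteq> set_pmf p" "\<And>x. d (f x) = x"
  shows "kl (map_pmf f q) (map_pmf f p) = kl q p"
  unfolding map_pmf_def
  by (subst kl_bind[where d=d]) (use assms in \<open>auto simp: kl_self\<close>)

lemma set_Jd_eq:
  assumes "goodB \<beta>" "goodB \<beta>'"
  shows "set_pmf (Jd S \<beta> act) = set_pmf (Jd S \<beta>' act)"
  using assms by (simp add: Jd_def goodB_def set_tb)

lemma kl_episode:
  assumes S: "2 < S" and g1: "goodB \<beta>1" and g2: "goodB \<beta>2"
    and fa: "\<And>tr t s. finite (set_pmf (act tr t s))" and H': "0 < H'"
  shows "kl (episode (mdpB S \<beta>2) (Suc H') act) (episode (mdpB S \<beta>1) (Suc H') act) =
    (\<Sum>s\<in>{2..<S}. (1 / real (S - 2)) *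
       (\<Sum>a\<in>set_pmf (act [] 0 s). pmf (act [] 0 s) a * kl (tb (\<beta>2 s a)) (tb (\<beta>1 s a))))"
proof -
  define d where "d y = (fst (y ! 0), fst (snd (y ! 0)), fst (y ! 1))" for y :: traj
  have finU: "finite {2..<S}" and neU: "{2..<S} \<noteq> {}" using S by auto
  have finJ: "finite (set_pmf (Jd S \<beta>2 act))"
    by (simp add: Jd_def set_pmf_of_set[OF neU finU] fa finite_set_tb)
  have finR: "finite (set_pmf (Rd S act H' x))" for x
    by (auto simp: Rd_def intro!: run_steps_finite fa finite_set_tb split: prod.splits)
  have decR: "d y = x" if "y \<in> set_pmf (Rd S act H' x)" for x y
  proof -
    obtain s a s' where x: "x = (s, a, s')" by (cases x) auto
    from that run_steps_shape[of y "mdpB S (\<lambda>_ _. 1/2)" act "Suc 0" H' s' "[(s, a, 0)]"]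
    obtain z where "y = [(s, a, 0)] @ z" "length z = H'" "fst (z ! 0) = s'"
      using H' by (auto simp: Rd_def x)
    then show ?thesis using H' by (auto simp: d_def x nth_Cons')
  qed
  have "kl (episode (mdpB S \<beta>2) (Suc H') act) (episode (mdpB S \<beta>1) (Suc H') act)
        = kl (Jd S \<beta>2 act) (Jd S \<beta>1 act)"
    unfolding episode_decomp[OF S]
    by (subst kl_bind[where d=d]) (use finJ set_Jd_eq[OF g2 g1] finR decR in \<open>auto simp: kl_self\<close>)
  also have "\<dots> = (\<Sum>s\<in>{2..<S}. (1 / real (S - 2)) *
       kl (act [] 0 s \<bind> (\<lambda>a. map_pmf (\<lambda>s'. (s, a, s')) (tb (\<beta>2 s a))))
          (act [] 0 s \<bind> (\<lambda>a. map_pmf (\<lambda>s'. (s, a, s')) (tb (\<beta>1 s a)))))"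
    unfolding Jd_def
    apply (subst kl_bind[where d=fst])
    using finU neU S g1 g2 unfolding goodB_def apply (auto simp: kl_self fa finite_set_tb set_tb)
    done
  also have "\<dots> = (\<Sum>s\<in>{2..<S}. (1 / real (S - 2)) *
       (\<Sum>a\<in>set_pmf (act [] 0 s). pmf (act [] 0 s) a * kl (tb (\<beta>2 s a)) (tb (\<beta>1 s a))))"
  proof (rule sum.cong[OF refl])
    fix s
    have "kl (act [] 0 s \<bind> (\<lambda>a. map_pmf (\<lambda>s'. (s, a, s')) (tb (\<beta>2 s a))))
          (act [] 0 s \<bind> (\<lambda>a. map_pmf (\<lambda>s'. (s, a, s')) (tb (\<beta>1 s a)))) =
          (\<Sum>a\<in>set_pmf (act [] 0 s). pmf (act [] 0 s) a * kl (map_pmf (\<lambda>s'. (s, a, s')) (tb (\<beta>2 s a))) (map_pmf (\<lambda>s'. (s, a, s')) (tb (\<beta>1 s a))))"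
      by (subst kl_bind[where d="\<lambda>y. fst (snd y)"]) (use g1 g2 in \<open>auto simp: kl_self fa finite_set_tb set_tb goodB_def\<close>)
    also have "\<dots> = (\<Sum>a\<in>set_pmf (act [] 0 s). pmf (act [] 0 s) a * kl (tb (\<beta>2 s a)) (tb (\<beta>1 s a)))"
      by (rule sum.cong[OF refl], subst kl_map[where d="\<lambda>y. snd (snd y)"])
         (use g1 g2 in \<open>auto simp: finite_set_tb goodB_def set_tb\<close>)
    finally show "(1 / real (S - 2)) * kl (act [] 0 s \<bind> (\<lambda>a. map_pmf (\<lambda>s'. (s, a, s')) (tb (\<beta>2 s a))))
          (act [] 0 s \<bind> (\<lambda>a. map_pmf (\<lambda>s'. (s, a, s')) (tb (\<beta>1 s a)))) =
       (1 / real (S - 2)) * (\<Sum>a\<in>set_pmf (act [] 0 s). pmf (act [] 0 s) a * kl (tb (\<beta>2 s a)) (tb (\<beta>1 s a)))"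
      by simp
  qed
  finally show ?thesis .
qed


lemma kl_collect:
  assumes va: "valid_alg A H alg" and S: "2 < S" and g1: "goodB \<beta>1" and g2: "goodB \<beta>2"
  shows "kl (collect (mdpB S \<beta>2) H alg n) (collect (mdpB S \<beta>1) H alg n) =
    (\<Sum>k<n. measure_pmf.expectation (collect (mdpB S \<beta>2) H alg k)
       (\<lambda>D. kl (episode (mdpB S \<beta>2) H (alg_act alg D)) (episode (mdpB S \<beta>1) H (alg_act alg D))))"
proof (induction n)
  case 0 then show ?case by (simp add: kl_self)
next
  case (Suc k)
  have fa: "finite (set_pmf (alg_act alg D tr t s))" for D tr t s
    using va unfolding valid_alg_def by (meson finite_lessThan finite_subset)
  let ?Q = "collect (mdpB S \<beta>2) H alg k"
  let ?f = "\<lambda>D. kl (episode (mdpB S \<beta>2) H (alg_act alg D)) (episode (mdpB S \<beta>1) H (alg_act alg D))"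
  have eq: "collect M H alg (Suc k) = collect M H alg k \<bind> (\<lambda>D. map_pmf (\<lambda>tr. D @ [tr]) (episode M H (alg_act alg D)))" for M
    by (simp add: map_pmf_def)
  have "kl (collect (mdpB S \<beta>2) H alg (Suc k)) (collect (mdpB S \<beta>1) H alg (Suc k))
      = kl ?Q (collect (mdpB S \<beta>1) H alg k) + (\<Sum>D\<in>set_pmf ?Q. pmf ?Q D * ?f D)"
    unfolding eq
    apply (subst kl_bind[where d=butlast])
    using collect_finite[OF va S] collect_set_eq[OF g2 g1] episode_finite[OF fa S] episode_set_eq[OF g2 g1]
    apply auto
    apply (rule sum.cong[OF refl])
    apply (subst kl_map[where d=last])
    using episode_finite[OF fa S] episode_set_eq[OF g2 g1] apply auto
    done
  also have "(\<Sum>D\<in>set_pmf ?Q. pmf ?Q D * ?f D) = measure_pmf.expectation ?Q ?f"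
    by (subst integral_measure_pmf_real[where A="set_pmf ?Q"])
       (auto simp: collect_finite[OF va S] mult.commute)
  finally show ?case using Suc.IH by simp
qed


definition betaT :: "real \<Rightarrow> (nat \<Rightarrow> nat) \<Rightarrow> nat \<Rightarrow> nat \<Rightarrow> real" where
  "betaT \<delta> \<theta> s a = 1/2 + (if a = \<theta> s then \<delta> else 0)"

definition betaQ :: "real \<Rightarrow> (nat \<Rightarrow> nat) \<Rightarrow> nat \<Rightarrow> nat \<Rightarrow> nat \<Rightarrow> real" where
  "betaQ \<delta> \<theta> s0 s a = (if s = s0 then 1/2 else betaT \<delta> \<theta> s a)"

lemma goodB_betaT: "0 \<le> \<delta> \<Longrightarrow> \<delta> < 1/2 \<Longrightarrow> goodB (betaT \<delta> \<theta>)"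
  by (auto simp: goodB_def betaT_def)

lemma goodB_betaQ: "0 \<le> \<delta> \<Longrightarrow> \<delta> < 1/2 \<Longrightarrow> goodB (betaQ \<delta> \<theta> s0)"
  by (auto simp: goodB_def betaT_def betaQ_def)

lemma betaQ_upd: "betaQ \<delta> (\<theta>(s0 := a0)) s0 = betaQ \<delta> \<theta> s0"
  by (auto simp: betaQ_def betaT_def fun_eq_iff)

definition K0 :: "real \<Rightarrow> real" where "K0 \<delta> = kl (tb (1/2)) (tb (1/2 + \<delta>))"

lemma pmf_tb1: "0 \<le> \<beta> \<Longrightarrow> \<beta> \<le> 1 \<Longrightarrow> pmf (tb \<beta>) 1 = \<beta>"
  using pmf_map_inj'[of "\<lambda>b. if b then 1::nat else 0" "bernoulli_pmf \<beta>" True]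
  by (simp add: tb_def inj_def)

lemma pmf_tb0: "0 \<le> \<beta> \<Longrightarrow> \<beta> \<le> 1 \<Longrightarrow> pmf (tb \<beta>) 0 = 1 - \<beta>"
  using pmf_map_inj'[of "\<lambda>b. if b then 1::nat else 0" "bernoulli_pmf \<beta>" False]
  by (simp add: tb_def inj_def)

lemma pmf_tb1': "0 \<le> \<beta> \<Longrightarrow> \<beta> \<le> 1 \<Longrightarrow> pmf (tb \<beta>) (Suc 0) = \<beta>"
  using pmf_tb1 by simp

lemma K0_eq:
  assumes "0 \<le> \<delta>" "\<delta> \<le> 1/4"
  shows "K0 \<delta> = 1/2 * ln (1 / ((1 + 2*\<delta>) * (1 - 2*\<delta>)))"
proof -
  have "K0 \<delta> = 1/2 * ln ((1/2) / (1/2 + \<delta>)) + 1/2 * ln ((1/2) / (1 - (1/2 + \<delta>)))"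
    unfolding K0_def kl_def using assms by (simp add: set_tb pmf_tb1' pmf_tb0)
  also have "\<dots> = 1/2 * ln (1 / ((1 + 2*\<delta>) * (1 - 2*\<delta>)))"
  proof -
    have a: "(1/2) / (1/2 + \<delta>) = 1 / (1 + 2*\<delta>)" using assms by (simp add: field_simps)
    have b: "(1/2) / (1 - (1/2 + \<delta>)) = 1 / (1 - 2*\<delta>)" using assms by (simp add: field_simps)
    have p1: "0 < 1 + 2*\<delta>" and p2: "0 < 1 - 2*\<delta>" using assms by auto
    have c: "ln (1 / ((1 + 2*\<delta>) * (1 - 2*\<delta>))) = - ln (1 + 2*\<delta>) - ln (1 - 2*\<delta>)"
      using p1 p2 by (simp add: ln_divide_pos ln_mult_pos)
    show ?thesis unfolding a b c using p1 p2 by (simp add: ln_div)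
  qed
  finally show ?thesis .
qed

lemma K0_nonneg:
  assumes "0 \<le> \<delta>" "\<delta> \<le> 1/4"
  shows "0 \<le> K0 \<delta>"
proof -
  have p: "0 < (1 + 2*\<delta>) * (1 - 2*\<delta>)" using assms by (intro mult_pos_pos) auto
  have "(1 + 2*\<delta>) * (1 - 2*\<delta>) \<le> 1" by (simp add: algebra_simps)
  then have "1 \<le> 1 / ((1 + 2*\<delta>) * (1 - 2*\<delta>))" using p by (simp add: field_simps)
  then show ?thesis unfolding K0_eq[OF assms] by simp
qed

lemma K0_bound:
  assumes "0 \<le> \<delta>" "\<delta> \<le> 1/4"
  shows "K0 \<delta> \<le> 4 * \<delta>^2"
proof -
  have "K0 \<delta> = 1/2 * ln (1 / ((1 + 2*\<delta>) * (1 - 2*\<delta>)))" by (rule K0_eq[OF assms])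
  also have "\<dots> \<le> 1/2 * (1 / ((1 + 2*\<delta>) * (1 - 2*\<delta>)) - 1)"
    using assms by (intro mult_left_mono ln_le_minus_one) (auto intro!: divide_pos_pos mult_pos_pos)
  also have "\<dots> = 1/2 * (4 * \<delta>^2 / (1 - 4 * \<delta>^2))"
  proof -
    have "\<delta> * \<delta> \<le> 1/4 * (1/4)" using assms by (intro mult_mono) auto
    then have ne: "1 - 4 * \<delta>^2 \<noteq> 0" by (simp add: power2_eq_square)
    have "(1 + 2*\<delta>) * (1 - 2*\<delta>) = 1 - 4 * \<delta>^2"
      by (simp add: algebra_simps power2_eq_square)
    then show ?thesis using ne by (simp add: field_simps)
  qed
  also have "\<dots> \<le> 4 * \<delta>^2"
  proof -
    have "\<delta>^2 \<le> 1/16" using assms power_mono[of \<delta> "1/4" 2] by (simp add: power2_eq_square)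
    then have h: "1/2 \<le> 1 - 4 * \<delta>^2" by simp
    have "4 * \<delta>^2 / (1 - 4 * \<delta>^2) \<le> 4 * \<delta>^2 / (1/2)"
      by (rule divide_left_mono) (use h in auto)
    then show ?thesis by simp
  qed
  finally show ?thesis .
qed

lemma kl_episode_spec:
  assumes S: "2 < S" and s0: "s0 \<in> {2..<S}" and d0: "0 \<le> \<delta>" "\<delta> < 1/2"
    and fa: "\<And>tr t s. finite (set_pmf (act tr t s))" and H': "0 < H'"
  shows "kl (episode (mdpB S (betaQ \<delta> \<theta> s0)) (Suc H') act) (episode (mdpB S (betaT \<delta> (\<theta>(s0 := a0)))) (Suc H') act) =
    (1 / real (S - 2)) * pmf (act [] 0 s0) a0 * K0 \<delta>"
proof -
  have "kl (episode (mdpB S (betaQ \<delta> \<theta> s0)) (Suc H') act) (episode (mdpB S (betaT \<delta> (\<theta>(s0 := a0)))) (Suc H') act)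
    = (\<Sum>s\<in>{2..<S}. (1 / real (S - 2)) *
       (\<Sum>a\<in>set_pmf (act [] 0 s). pmf (act [] 0 s) a * kl (tb (betaQ \<delta> \<theta> s0 s a)) (tb (betaT \<delta> (\<theta>(s0 := a0)) s a))))"
    by (rule kl_episode[OF S goodB_betaT[OF d0] goodB_betaQ[OF d0] fa H'])
  also have "\<dots> = (\<Sum>s\<in>{2..<S}. (1 / real (S - 2)) *
       (\<Sum>a\<in>set_pmf (act [] 0 s). pmf (act [] 0 s) a * (if s = s0 \<and> a = a0 then K0 \<delta> else 0)))"
    by (intro sum.cong refl arg_cong2[where f="(*)"]) (auto simp: betaQ_def betaT_def kl_self K0_def)
  also have "\<dots> = (1 / real (S - 2)) * pmf (act [] 0 s0) a0 * K0 \<delta>"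
  proof -
    have inner: "(\<Sum>a\<in>set_pmf (act [] 0 s). pmf (act [] 0 s) a * (if s = s0 \<and> a = a0 then K0 \<delta> else 0))
       = (if s = s0 then pmf (act [] 0 s0) a0 * K0 \<delta> else 0)" for s
    proof (cases "s = s0")
      case True
      then show ?thesis
        by (cases "a0 \<in> set_pmf (act [] 0 s0)") (auto simp: fa set_pmf_iff if_distrib cong: if_cong)
    qed simp
    have "(\<Sum>s\<in>{2..<S}. (1 / real (S - 2)) * (if s = s0 then pmf (act [] 0 s0) a0 * K0 \<delta> else 0))
        = (\<Sum>s\<in>{2..<S}. (if s = s0 then (1 / real (S - 2)) * (pmf (act [] 0 s0) a0 * K0 \<delta>) else 0))"
      by (rule sum.cong) auto
    also have "\<dots> = (1 / real (S - 2)) * (pmf (act [] 0 s0) a0 * K0 \<delta>)"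
      using s0 by (subst sum.delta) auto
    finally show ?thesis unfolding inner by simp
  qed
  finally show ?thesis .
qed


lemma total_reward_snoc: "total_reward (tr @ [(s, a, r)]) = total_reward tr + r"
  by (simp add: total_reward_def)

lemma run_reward:
  "s \<in> {0, 1} \<Longrightarrow> y \<in> set_pmf (run_steps (mdpB S \<beta>) act (Suc t) k s tr) \<Longrightarrow>
     total_reward y = total_reward tr + real k * (if s = 1 then 1 else 0)"
proof (induction k arbitrary: t tr)
  case 0 then show ?case by simp
next
  case (Suc k)
  from Suc.prems obtain a where
    y: "y \<in> set_pmf (run_steps (mdpB S \<beta>) act (Suc (Suc t)) k s (tr @ [(s, a, if s = 1 then 1 else 0)]))"
    by (auto split: if_splits)
  from Suc.IH[OF Suc.prems(1) y] show ?case by (auto simp: total_reward_snoc algebra_simps)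
qed

lemma set_tb_sub: "set_pmf (tb \<beta>) \<subseteq> {0, 1}"
  by (auto simp: tb_def)

lemma integral_tb:
  assumes "0 \<le> \<beta>" "\<beta> \<le> 1"
  shows "measure_pmf.expectation (tb \<beta>) (\<lambda>s'. c * (if s' = 1 then 1 else 0)) = c * \<beta>"
  using assms by (simp add: tb_def)



lemma pol_value_mdpB:
  assumes S: "2 < S" and b: "\<And>s a. 0 \<le> \<beta> s a \<and> \<beta> s a \<le> 1"
  shows "pol_value (mdpB S \<beta>) (Suc H') \<pi> =
     real H' * (\<Sum>s\<in>{2..<S}. measure_pmf.expectation (\<pi> 0 s) (\<beta> s)) / real (S - 2)"
proof -
  let ?act = "\<lambda>(tr::traj) t s. \<pi> t s"
  define h where "h x = real H' * (if snd (snd x) = 1 then 1 else 0)" for x :: "nat \<times> nat \<times> nat"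
  have finU: "finite {2..<S}" and neU: "{2..<S} \<noteq> {}" using S by auto
  have cst: "map_pmf total_reward (Rd S ?act H' x) = return_pmf (h x)" if x: "x \<in> set_pmf (Jd S \<beta> ?act)" for x
  proof -
    obtain s a s' where xe: "x = (s, a, s')" by (cases x) auto
    have "x \<in> (\<Union>s0\<in>set_pmf (pmf_of_set {2..<S}). \<Union>a0\<in>set_pmf (?act [] 0 s0). (\<lambda>s'. (s0, a0, s')) ` set_pmf (tb (\<beta> s0 a0)))"
      using x unfolding Jd_def set_bind_pmf set_map_pmf .
    then have s': "s' \<in> {0, 1}" using set_tb_sub unfolding xe by blast
    have "map_pmf total_reward (Rd S ?act H' x) = map_pmf (\<lambda>_. h x) (Rd S ?act H' x)"
    proof (rule map_pmf_cong[OF refl])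
      fix y assume "y \<in> set_pmf (Rd S ?act H' x)"
      then have "y \<in> set_pmf (run_steps (mdpB S (\<lambda>_ _. 1/2)) ?act (Suc 0) H' s' [(s, a, 0)])"
        by (simp add: Rd_def xe)
      from run_reward[OF s' this] show "total_reward y = h x"
        by (simp add: h_def xe total_reward_def)
    qed
    then show ?thesis by simp
  qed
  have mp: "map_pmf total_reward (episode (mdpB S \<beta>) (Suc H') ?act) = map_pmf h (Jd S \<beta> ?act)"
    unfolding episode_decomp[OF S] map_bind_pmf map_pmf_def[of h]
    by (rule bind_pmf_cong[OF refl]) (rule cst)
  have "pol_value (mdpB S \<beta>) (Suc H') \<pi> = measure_pmf.expectation (map_pmf total_reward (episode (mdpB S \<beta>) (Suc H') ?act)) (\<lambda>x. x)"
    unfolding pol_value_def by simp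
  also have "\<dots> = measure_pmf.expectation (Jd S \<beta> ?act) h"
    unfolding mp by simp
  also have "\<dots> = measure_pmf.expectation (pmf_of_set {2..<S})
      (\<lambda>s. measure_pmf.expectation (\<pi> 0 s) (\<lambda>a. real H' * \<beta> s a))"
  proof -
    have h0: "0 \<le> h y" and hB: "h y \<le> real H'" for y by (auto simp: h_def)
    have "measure_pmf.expectation (Jd S \<beta> ?act) h = measure_pmf.expectation (pmf_of_set {2..<S})
      (\<lambda>s. measure_pmf.expectation (\<pi> 0 s \<bind> (\<lambda>a. map_pmf (\<lambda>s'. (s, a, s')) (tb (\<beta> s a)))) h)"
      unfolding Jd_def by (rule integral_bind_pmf_bdd[OF h0 hB])
    also have "\<dots> = measure_pmf.expectation (pmf_of_set {2..<S})
      (\<lambda>s. measure_pmf.expectation (\<pi> 0 s) (\<lambda>a. measure_pmf.expectation (map_pmf (\<lambda>s'. (s, a, s')) (tb (\<beta> s a))) h))"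
      by (rule Bochner_Integration.integral_cong[OF refl], rule integral_bind_pmf_bdd[OF h0 hB])
    also have "\<dots> = measure_pmf.expectation (pmf_of_set {2..<S})
      (\<lambda>s. measure_pmf.expectation (\<pi> 0 s) (\<lambda>a. real H' * \<beta> s a))"
      apply (rule Bochner_Integration.integral_cong[OF refl], rule Bochner_Integration.integral_cong[OF refl])
      unfolding integral_map_pmf h_def snd_conv
      by (rule integral_tb) (use b in auto)
    finally show ?thesis .
  qed
  also have "\<dots> = real H' * (\<Sum>s\<in>{2..<S}. measure_pmf.expectation (\<pi> 0 s) (\<beta> s)) / real (S - 2)"
    unfolding integral_pmf_of_set[OF neU finU] by (simp add: sum_distrib_left)
  finally show ?thesis .
qed



definition Gth :: "(nat \<Rightarrow> nat) \<Rightarrow> nat \<Rightarrow> policy \<Rightarrow> real" where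
  "Gth \<theta> S \<pi> = (\<Sum>s\<in>{2..<S}. pmf (\<pi> 0 s) (\<theta> s)) / real (S - 2)"

lemma Gth_le1: "2 < S \<Longrightarrow> Gth \<theta> S \<pi> \<le> 1"
proof -
  assume S: "2 < S"
  have "(\<Sum>s\<in>{2..<S}. pmf (\<pi> 0 s) (\<theta> s)) \<le> (\<Sum>s\<in>{2..<S}. 1)"
    by (rule sum_mono) (simp add: pmf_le_1)
  then show ?thesis using S by (simp add: Gth_def)
qed

lemma Gth_nonneg: "0 \<le> Gth \<theta> S \<pi>"
  by (auto simp: Gth_def intro!: sum_nonneg divide_nonneg_nonneg)

lemma pol_value_betaT:
  assumes S: "2 < S" and d: "0 \<le> \<delta>" "\<delta> \<le> 1/2"
  shows "pol_value (mdpB S (betaT \<delta> \<theta>)) (Suc H') \<pi> = real H' * (1/2 + \<delta> * Gth \<theta> S \<pi>)"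
proof -
  have b: "0 \<le> betaT \<delta> \<theta> s a \<and> betaT \<delta> \<theta> s a \<le> 1" for s a using d by (auto simp: betaT_def)
  have e: "measure_pmf.expectation (\<pi> 0 s) (betaT \<delta> \<theta> s) = 1/2 + \<delta> * pmf (\<pi> 0 s) (\<theta> s)" for s
  proof -
    have "betaT \<delta> \<theta> s = (\<lambda>a. 1/2 + \<delta> * indicator {\<theta> s} a)"
      by (auto simp: betaT_def fun_eq_iff indicator_def)
    moreover have "integrable (measure_pmf (\<pi> 0 s)) (\<lambda>a. \<delta> * indicator {\<theta> s} a :: real)"
      by (rule measure_pmf.integrable_const_bound[where B="\<bar>\<delta>\<bar>"]) (auto simp: indicator_def)
    ultimately show ?thesis by (simp add: measure_pmf_single Bochner_Integration.integral_add)
  qed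
  have c: "real (S - 2) > 0" using S by simp
  have sumeq: "(\<Sum>s\<in>{2..<S}. 1/2 + \<delta> * pmf (\<pi> 0 s) (\<theta> s)) = real (S - 2) / 2 + \<delta> * (\<Sum>s\<in>{2..<S}. pmf (\<pi> 0 s) (\<theta> s))"
    by (simp add: sum.distrib sum_distrib_left)
  show ?thesis
    unfolding pol_value_mdpB[OF S b] e sumeq Gth_def
    using c by (simp add: field_simps)
qed

lemma gap_bound:
  assumes S: "2 < S" and d: "0 \<le> \<delta>" "\<delta> \<le> 1/2" and A: "0 < A"
    and th: "\<And>s. s \<in> {2..<S} \<Longrightarrow> \<theta> s < A"
  shows "real H' * \<delta> * (1 - Gth \<theta> S \<pi>) \<le> vstar (mdpB S (betaT \<delta> \<theta>)) A (Suc H') - pol_value (mdpB S (betaT \<delta> \<theta>)) (Suc H') \<pi>"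
proof -
  let ?M = "mdpB S (betaT \<delta> \<theta>)"
  define \<pi>0 :: policy where "\<pi>0 t s = return_pmf (if \<theta> s < A then \<theta> s else 0)" for t s
  have v0: "valid_policy A (Suc H') \<pi>0" using A by (auto simp: valid_policy_def \<pi>0_def)
  have G0: "Gth \<theta> S \<pi>0 = 1"
    using S th by (simp add: Gth_def \<pi>0_def)
  have bdd: "bdd_above ((\<lambda>\<pi>. pol_value ?M (Suc H') \<pi>) ` {\<pi>. valid_policy A (Suc H') \<pi>})"
  proof (rule bdd_aboveI2)
    fix \<pi>' show "pol_value ?M (Suc H') \<pi>' \<le> real H' * (1/2 + \<delta>)"
      unfolding pol_value_betaT[OF S d]
      using Gth_le1[OF S, of \<theta> \<pi>'] d by (intro mult_left_mono) (auto intro: mult_left_le)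
  qed
  have "pol_value ?M (Suc H') \<pi>0 \<le> vstar ?M A (Suc H')"
    unfolding vstar_def by (rule cSUP_upper[OF _ bdd]) (use v0 in simp)
  then show ?thesis
    unfolding pol_value_betaT[OF S d] G0 by (simp add: algebra_simps)
qed



definition gfun :: "algorithm \<Rightarrow> nat \<Rightarrow> nat \<Rightarrow> traj list \<Rightarrow> real" where
  "gfun alg s a D = measure_pmf.expectation (alg_out alg D) (\<lambda>\<pi>. pmf (\<pi> 0 s) a)"

lemma sum_pmf_le1: "(\<Sum>a\<in>F. pmf M a) \<le> 1"
proof (cases "finite F")
  case True
  then show ?thesis using measure_measure_pmf_finite[OF True, of M] measure_pmf.prob_le_1[of M F] by simp
qed simp

lemma integrable_bdd01: "(\<And>x. 0 \<le> f x) \<Longrightarrow> (\<And>x. f x \<le> 1) \<Longrightarrow> integrable (measure_pmf M) (f :: _ \<Rightarrow> real)"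
  by (rule measure_pmf.integrable_const_bound[where B=1]) auto

lemma gfun_nonneg: "0 \<le> gfun alg s a D"
  by (auto simp: gfun_def intro!: integral_nonneg_AE)

lemma gfun_le1: "gfun alg s a D \<le> 1"
proof -
  have "gfun alg s a D \<le> measure_pmf.expectation (alg_out alg D) (\<lambda>_. 1)"
    unfolding gfun_def by (rule integral_mono) (auto intro: integrable_bdd01 pmf_le_1)
  then show ?thesis by simp
qed

lemma gfun_sum_le1: "(\<Sum>a<A. gfun alg s a D) \<le> 1"
proof -
  have "(\<Sum>a<A. gfun alg s a D) = measure_pmf.expectation (alg_out alg D) (\<lambda>\<pi>. \<Sum>a<A. pmf (\<pi> 0 s) a)"
    unfolding gfun_def
    by (rule Bochner_Integration.integral_sum[where I="{..<A}" and M="measure_pmf (alg_out alg D)" and f="\<lambda>a \<pi>. pmf (\<pi> 0 s) a", symmetric])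
       (auto intro: integrable_bdd01 pmf_le_1)
  also have "\<dots> \<le> measure_pmf.expectation (alg_out alg D) (\<lambda>_. 1)"
    by (rule integral_mono) (auto intro!: integrable_bdd01 sum_pmf_le1 sum_nonneg)
  finally show ?thesis by simp
qed

lemma sum_sqrt_le:
  assumes "finite I" "\<And>i. i \<in> I \<Longrightarrow> 0 \<le> x i"
  shows "(\<Sum>i\<in>I. sqrt (x i)) \<le> sqrt (real (card I) * (\<Sum>i\<in>I. x i))"
proof -
  have "(\<Sum>i\<in>I. 1 * sqrt (x i))^2 \<le> (\<Sum>i\<in>I. 1^2) * (\<Sum>i\<in>I. (sqrt (x i))^2)"
    by (rule Cauchy_Schwarz_ineq_sum)
  also have "\<dots> = real (card I) * (\<Sum>i\<in>I. x i)"
    using assms by simp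
  finally show ?thesis by (intro real_le_rsqrt) simp
qed

lemma per_s:
  assumes va: "valid_alg A (Suc H') alg" and S: "2 < S" and s: "s \<in> {2..<S}" and H': "0 < H'"
    and d: "0 \<le> \<delta>" "\<delta> \<le> 1/4"
  shows "(\<Sum>a<A. measure_pmf.expectation (collect (mdpB S (betaT \<delta> (f(s := a)))) (Suc H') alg n) (gfun alg s a))
         \<le> 1 + 2 * sqrt (real A * (real n * K0 \<delta> / real (S - 2)))"
proof -
  have d': "\<delta> < 1/2" using d by simp
  let ?Q = "\<lambda>k. collect (mdpB S (betaQ \<delta> f s)) (Suc H') alg k"
  let ?P = "\<lambda>a. collect (mdpB S (betaT \<delta> (f(s := a)))) (Suc H') alg n"
  have fa: "finite (set_pmf (alg_act alg D tr t s'))" for D tr t s'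
    using va unfolding valid_alg_def by (meson finite_lessThan finite_subset)
  have sa: "set_pmf (alg_act alg D tr t s') \<subseteq> {..<A}" for D tr t s'
    using va unfolding valid_alg_def by blast
  define kla where "kla a = kl (?Q n) (?P a)" for a
  have step: "measure_pmf.expectation (?P a) (gfun alg s a) \<le> measure_pmf.expectation (?Q n) (gfun alg s a) + 2 * sqrt (kla a)" for a
    unfolding kla_def
    by (rule kl_tv) (auto simp: collect_finite[OF va S] collect_set_eq[OF goodB_betaQ[OF d(1) d', of f s] goodB_betaT[OF d(1) d', of "f(s:=a)"]] gfun_nonneg gfun_le1)
  have klaeq: "kla a = (\<Sum>k<n. measure_pmf.expectation (?Q k) (\<lambda>D. (1 / real (S - 2)) * pmf (alg_act alg D [] 0 s) a * K0 \<delta>))" for a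
    unfolding kla_def
    by (subst kl_collect[OF va S goodB_betaT[OF d(1) d'] goodB_betaQ[OF d(1) d']])
       (simp add: kl_episode_spec[OF S s d(1) d' fa H'])
  have kla0: "0 \<le> kla a" for a
  proof -
    have "0 \<le> K0 \<delta>" by (rule K0_nonneg[OF d])
    then show ?thesis unfolding klaeq by (auto intro!: sum_nonneg integral_nonneg_AE)
  qed
  have sumkla: "(\<Sum>a<A. kla a) \<le> real n * K0 \<delta> / real (S - 2)"
  proof -
    define c where "c = K0 \<delta> / real (S - 2)"
    have c0: "0 \<le> c" unfolding c_def using K0_nonneg[OF d] by simp
    have "(\<Sum>a<A. kla a) = (\<Sum>k<n. \<Sum>a<A. measure_pmf.expectation (?Q k) (\<lambda>D. c * pmf (alg_act alg D [] 0 s) a))"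
      unfolding klaeq c_def by (subst sum.swap) (simp add: mult_ac)
    also have "\<dots> \<le> (\<Sum>k<n. c)"
    proof (rule sum_mono)
      fix k
      have "(\<Sum>a<A. measure_pmf.expectation (?Q k) (\<lambda>D. c * pmf (alg_act alg D [] 0 s) a))
          = measure_pmf.expectation (?Q k) (\<lambda>D. \<Sum>a<A. c * pmf (alg_act alg D [] 0 s) a)"
        by (rule Bochner_Integration.integral_sum[symmetric])
           (rule measure_pmf.integrable_const_bound[where B=c], auto simp: c0 pmf_le_1 mult_left_le)
      also have "\<dots> \<le> measure_pmf.expectation (?Q k) (\<lambda>_. c)"
      proof (rule integral_mono)
        show "integrable (measure_pmf (?Q k)) (\<lambda>D. \<Sum>a<A. c * pmf (alg_act alg D [] 0 s) a)"
        proof (rule measure_pmf.integrable_const_bound[where B=c])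
          have "\<bar>c * (\<Sum>a<A. pmf (alg_act alg D [] 0 s) a)\<bar> \<le> c" for D
            using c0 sum_pmf_le1[of "alg_act alg D [] 0 s" "{..<A}"]
            by (simp add: abs_mult sum_nonneg mult_left_le)
          then show "AE D in measure_pmf (?Q k). norm (\<Sum>a<A. c * pmf (alg_act alg D [] 0 s) a) \<le> c"
            by (simp add: sum_distrib_left[symmetric])
        qed simp
        show "(\<Sum>a<A. c * pmf (alg_act alg D [] 0 s) a) \<le> c" for D
          using c0 by (auto simp: sum_distrib_left[symmetric] intro!: mult_left_le sum_pmf_le1)
      qed simp
      finally show "(\<Sum>a<A. measure_pmf.expectation (?Q k) (\<lambda>D. c * pmf (alg_act alg D [] 0 s) a)) \<le> c" by simp
    qed
    also have "\<dots> = real n * K0 \<delta> / real (S - 2)" by (simp add: c_def)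
    finally show ?thesis .
  qed
  have "(\<Sum>a<A. measure_pmf.expectation (?P a) (gfun alg s a)) \<le>
        (\<Sum>a<A. measure_pmf.expectation (?Q n) (gfun alg s a)) + 2 * (\<Sum>a<A. sqrt (kla a))"
  proof -
    have "(\<Sum>a<A. measure_pmf.expectation (?P a) (gfun alg s a)) \<le> (\<Sum>a<A. measure_pmf.expectation (?Q n) (gfun alg s a) + 2 * sqrt (kla a))"
      by (rule sum_mono[OF step])
    then show ?thesis by (simp add: sum.distrib sum_distrib_left)
  qed
  also have "(\<Sum>a<A. measure_pmf.expectation (?Q n) (gfun alg s a)) \<le> 1"
  proof -
    have "(\<Sum>a<A. measure_pmf.expectation (?Q n) (gfun alg s a)) = measure_pmf.expectation (?Q n) (\<lambda>D. \<Sum>a<A. gfun alg s a D)"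
      by (rule Bochner_Integration.integral_sum[symmetric]) (auto intro: integrable_bdd01 gfun_nonneg gfun_le1)
    also have "\<dots> \<le> measure_pmf.expectation (?Q n) (\<lambda>_. 1)"
      by (rule integral_mono) (auto intro!: integrable_bdd01 gfun_sum_le1 sum_nonneg gfun_nonneg)
    finally show ?thesis by simp
  qed
  also have "(\<Sum>a<A. sqrt (kla a)) \<le> sqrt (real A * (real n * K0 \<delta> / real (S - 2)))"
  proof -
    have "(\<Sum>a<A. sqrt (kla a)) \<le> sqrt (real (card {..<A}) * (\<Sum>a<A. kla a))"
      by (rule sum_sqrt_le) (auto simp: kla0)
    also have "\<dots> \<le> sqrt (real A * (real n * K0 \<delta> / real (S - 2)))"
    proof -
      have "real A * sum kla {..<A} \<le> real A * (real n * K0 \<delta> / real (S - 2))"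
        by (rule mult_left_mono[OF sumkla]) simp
      then show ?thesis by (simp only: card_lessThan real_sqrt_le_mono)
    qed
    finally show ?thesis .
  qed
  finally show ?thesis by simp
qed



definition Pth :: "nat \<Rightarrow> nat \<Rightarrow> (nat \<Rightarrow> nat pmf)" where
  "Pth A k = (\<lambda>_. pmf_of_set {..<A})"

lemma exp01:
  fixes f :: "'a \<Rightarrow> real"
  assumes "\<And>x. 0 \<le> f x" "\<And>x. f x \<le> 1"
  shows "0 \<le> measure_pmf.expectation M f" "measure_pmf.expectation M f \<le> 1"
proof -
  show "0 \<le> measure_pmf.expectation M f" by (rule integral_nonneg_AE) (use assms in auto)
  have "measure_pmf.expectation M f \<le> measure_pmf.expectation M (\<lambda>_. 1)"
    by (rule integral_mono) (use assms in \<open>auto intro: integrable_bdd01\<close>)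
  then show "measure_pmf.expectation M f \<le> 1" by simp
qed

lemma avg_theta:
  assumes va: "valid_alg A (Suc H') alg" and S: "2 < S" and s: "s \<in> {2..<S}" and H': "0 < H'"
    and d: "0 \<le> \<delta>" "\<delta> \<le> 1/4" and A: "0 < A"
  shows "measure_pmf.expectation (Pi_pmf {2..<S} 0 (\<lambda>_. pmf_of_set {..<A}))
      (\<lambda>\<theta>. measure_pmf.expectation (collect (mdpB S (betaT \<delta> \<theta>)) (Suc H') alg n) (gfun alg s (\<theta> s)))
     \<le> (1 + 2 * sqrt (real A * (real n * K0 \<delta> / real (S - 2)))) / real A"
proof -
  let ?U = "pmf_of_set {..<A}"
  let ?B = "(1 + 2 * sqrt (real A * (real n * K0 \<delta> / real (S - 2)))) / real A"
  define h where "h \<theta> = measure_pmf.expectation (collect (mdpB S (betaT \<delta> \<theta>)) (Suc H') alg n) (gfun alg s (\<theta> s))" for \<theta>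
  have h0: "0 \<le> h \<theta>" for \<theta> unfolding h_def by (auto intro!: integral_nonneg_AE gfun_nonneg)
  have h1: "h \<theta> \<le> 1" for \<theta>
  proof -
    have "h \<theta> \<le> measure_pmf.expectation (collect (mdpB S (betaT \<delta> \<theta>)) (Suc H') alg n) (\<lambda>_. 1)"
      unfolding h_def by (rule integral_mono) (auto intro: integrable_bdd01 gfun_nonneg gfun_le1)
    then show ?thesis by simp
  qed
  define D' where "D' = {2..<S} - {s}"
  have D: "{2..<S} = insert s D'" and fD: "finite D'" and sD: "s \<notin> D'" using s by (auto simp: D'_def)
  have Pi: "Pi_pmf {2..<S} 0 (\<lambda>_. ?U) = Pi_pmf D' 0 (\<lambda>_. ?U) \<bind> (\<lambda>f. ?U \<bind> (\<lambda>y. return_pmf (f(s := y))))"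
    unfolding D Pi_pmf_insert'[OF fD sD] by (rule bind_commute_pmf)
  have inner: "measure_pmf.expectation (?U \<bind> (\<lambda>y. return_pmf (f(s := y)))) h \<le> ?B" for f
  proof -
    have "measure_pmf.expectation (?U \<bind> (\<lambda>y. return_pmf (f(s := y)))) h
        = measure_pmf.expectation ?U (\<lambda>y. h (f(s := y)))"
      by (subst integral_bind_pmf_bdd[OF h0 h1]) simp
    also have "\<dots> = (\<Sum>y<A. h (f(s := y))) / real A"
      using A by (subst integral_pmf_of_set) auto
    also have "(\<Sum>y<A. h (f(s := y))) = (\<Sum>a<A. measure_pmf.expectation (collect (mdpB S (betaT \<delta> (f(s := a)))) (Suc H') alg n) (gfun alg s a))"
      by (simp add: h_def)
    also have "\<dots> / real A \<le> ?B"
      by (rule divide_right_mono[OF per_s[OF va S s H' d]]) simp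
    finally show ?thesis .
  qed
  have "measure_pmf.expectation (Pi_pmf {2..<S} 0 (\<lambda>_. ?U)) h
      = measure_pmf.expectation (Pi_pmf D' 0 (\<lambda>_. ?U)) (\<lambda>f. measure_pmf.expectation (?U \<bind> (\<lambda>y. return_pmf (f(s := y)))) h)"
    unfolding Pi by (rule integral_bind_pmf_bdd[OF h0 h1])
  also have "\<dots> \<le> measure_pmf.expectation (Pi_pmf D' 0 (\<lambda>_. ?U)) (\<lambda>_. ?B)"
  proof (rule integral_mono[OF _ _ inner])
    show "integrable (measure_pmf (Pi_pmf D' 0 (\<lambda>_. ?U))) (\<lambda>f. measure_pmf.expectation (?U \<bind> (\<lambda>y. return_pmf (f(s := y)))) h)"
      by (rule integrable_bdd01) (auto intro: exp01[OF h0 h1])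
  qed simp
  also have "\<dots> = ?B" by simp
  finally show ?thesis unfolding h_def .
qed



lemma valid_mdp_mdpB:
  assumes S: "2 < S" shows "valid_mdp S A H (mdpB S \<beta>)"
proof -
  have t: "set_pmf (tb b) \<subseteq> {..<S}" for b using set_tb_sub[of b] S by fastforce
  show ?thesis unfolding valid_mdp_def using S t by auto
qed

lemma W_formula:
  assumes S: "2 < S"
  shows "measure_pmf.expectation (alg_output M H alg n) (Gth \<theta> S) =
    (\<Sum>s\<in>{2..<S}. measure_pmf.expectation (collect M H alg n) (gfun alg s (\<theta> s))) / real (S - 2)"
proof -
  have G0: "0 \<le> Gth \<theta> S \<pi>" and G1: "Gth \<theta> S \<pi> \<le> 1" for \<pi> using Gth_nonneg Gth_le1[OF S] by auto
  have inner: "measure_pmf.expectation (alg_out alg D) (Gth \<theta> S) = (\<Sum>s\<in>{2..<S}. gfun alg s (\<theta> s) D) / real (S - 2)" for D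
    unfolding Gth_def gfun_def
    by (simp add: Bochner_Integration.integral_sum[OF integrable_bdd01] pmf_le_1)
  have "measure_pmf.expectation (alg_output M H alg n) (Gth \<theta> S) =
      measure_pmf.expectation (collect M H alg n) (\<lambda>D. (\<Sum>s\<in>{2..<S}. gfun alg s (\<theta> s) D) / real (S - 2))"
    unfolding alg_output_def by (subst integral_bind_pmf_bdd[OF G0 G1]) (simp add: inner)
  also have "\<dots> = (\<Sum>s\<in>{2..<S}. measure_pmf.expectation (collect M H alg n) (gfun alg s (\<theta> s))) / real (S - 2)"
    by (simp add: Bochner_Integration.integral_sum[OF integrable_bdd01] gfun_nonneg gfun_le1)
  finally show ?thesis .
qed

lemma markov_pmf:
  fixes G :: "'a \<Rightarrow> real"
  assumes "\<And>x. 0 \<le> G x" "\<And>x. G x \<le> 1"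
  shows "1 - 4/3 * measure_pmf.expectation M G \<le> measure_pmf.prob M {x. G x \<le> 3/4}"
proof -
  have "measure_pmf.prob M {x. 3/4 < G x} = measure_pmf.expectation M (indicator {x. 3/4 < G x})"
    by simp
  also have "\<dots> \<le> measure_pmf.expectation M (\<lambda>x. 4/3 * G x)"
  proof (rule integral_mono)
    show "integrable (measure_pmf M) (indicator {x. 3/4 < G x} :: 'a \<Rightarrow> real)"
      by (rule integrable_bdd01) (auto simp: indicator_def)
    show "integrable (measure_pmf M) (\<lambda>x. 4/3 * G x)"
      by (rule measure_pmf.integrable_const_bound[where B="4/3"]) (use assms in auto)
  qed (use assms in \<open>auto simp: indicator_def\<close>)
  finally have a: "measure_pmf.prob M {x. 3/4 < G x} \<le> 4/3 * measure_pmf.expectation M G" by simp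
  have "measure_pmf.prob M {x. G x \<le> 3/4} = 1 - measure_pmf.prob M {x. 3/4 < G x}"
  proof -
    have e: "{x. G x \<le> 3/4} = space (measure_pmf M) - {x. 3/4 < G x}" by auto
    show ?thesis unfolding e by (rule measure_pmf.prob_compl) simp
  qed
  with a show ?thesis by simp
qed



lemma core:
  assumes va: "valid_alg A (Suc H') alg" and S: "2 < S" and H': "0 < H'"
    and d: "0 \<le> \<delta>" "\<delta> \<le> 1/4" and A: "0 < A"
    and Bd: "(1 + 2 * sqrt (real A * (real n * K0 \<delta> / real (S - 2)))) / real A \<le> b"
  shows "\<exists>\<theta>. (\<forall>s\<in>{2..<S}. \<theta> s < A) \<and>
    measure_pmf.expectation (alg_output (mdpB S (betaT \<delta> \<theta>)) (Suc H') alg n) (Gth \<theta> S) \<le> b"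
proof -
  let ?Pi = "Pi_pmf {2..<S} 0 (\<lambda>_. pmf_of_set {..<A})"
  define W where "W \<theta> = measure_pmf.expectation (alg_output (mdpB S (betaT \<delta> \<theta>)) (Suc H') alg n) (Gth \<theta> S)" for \<theta>
  define hs where "hs s \<theta> = measure_pmf.expectation (collect (mdpB S (betaT \<delta> \<theta>)) (Suc H') alg n) (gfun alg s (\<theta> s))" for s \<theta>
  have hs01: "0 \<le> hs s \<theta>" "hs s \<theta> \<le> 1" for s \<theta>
    unfolding hs_def by (rule exp01, rule gfun_nonneg, rule gfun_le1)+
  have Weq: "W \<theta> = (\<Sum>s\<in>{2..<S}. hs s \<theta>) / real (S - 2)" for \<theta>
    unfolding W_def hs_def by (rule W_formula[OF S])
  have c: "0 < real (S - 2)" using S by simp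
  have "measure_pmf.expectation ?Pi W = (\<Sum>s\<in>{2..<S}. measure_pmf.expectation ?Pi (hs s)) / real (S - 2)"
    unfolding Weq by (simp add: Bochner_Integration.integral_sum[OF integrable_bdd01[OF hs01]])
  also have "\<dots> \<le> (\<Sum>s\<in>{2..<S}. b) / real (S - 2)"
  proof (rule divide_right_mono[OF sum_mono])
    fix s assume s: "s \<in> {2..<S}"
    show "measure_pmf.expectation ?Pi (hs s) \<le> b"
      unfolding hs_def using avg_theta[OF va S s H' d A, of n] Bd by linarith
  qed simp
  also have "\<dots> = b" using c by simp
  finally have EW: "measure_pmf.expectation ?Pi W \<le> b" .
  have sub: "set_pmf ?Pi \<subseteq> PiE_dflt {2..<S} 0 (set_pmf \<circ> (\<lambda>_. pmf_of_set {..<A}))"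
    by (rule set_Pi_pmf_subset') simp
  have sU: "set_pmf (pmf_of_set {..<A}) = {..<A}" using A by (intro set_pmf_of_set) auto
  have fin: "finite (set_pmf ?Pi)"
    by (rule finite_subset[OF sub]) (rule finite_PiE_dflt, auto simp: sU)
  obtain m where m: "m \<in> W ` set_pmf ?Pi" and mmin: "\<not> (\<exists>x\<in>W ` set_pmf ?Pi. x < m)"
    using ex_min_if_finite[of "W ` set_pmf ?Pi"] fin set_pmf_not_empty by blast
  then obtain \<theta>0 where t0: "\<theta>0 \<in> set_pmf ?Pi" and mW: "m = W \<theta>0" by blast
  have "W \<theta>0 \<le> measure_pmf.expectation ?Pi W"
  proof (rule measure_pmf.integral_ge_const)
    have "0 \<le> W \<theta>" "W \<theta> \<le> 1" for \<theta>
      unfolding W_def by (rule exp01, rule Gth_nonneg, rule Gth_le1[OF S])+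
    then show "integrable (measure_pmf ?Pi) W" by (rule integrable_bdd01)
    show "AE x in measure_pmf ?Pi. W \<theta>0 \<le> W x"
      using mmin mW by (auto simp: AE_measure_pmf_iff not_less)
  qed
  with EW have "W \<theta>0 \<le> b" by simp
  moreover have "\<forall>s\<in>{2..<S}. \<theta>0 s < A"
    using sub t0 A by (auto simp: PiE_dflt_def sU)
  ultimately show ?thesis unfolding W_def by blast
qed



lemma main_core:
  fixes H A S :: nat and \<epsilon> :: real and alg n
  assumes H2: "2 \<le> H" and A2: "2 \<le> A" and e0: "0 < \<epsilon>" and e1: "\<epsilon> < 1 / (48 * sqrt 8)"
    and S4: "4 \<le> real S" and va0: "valid_alg A H alg"
    and nb: "real n \<le> 1/51200 * real H ^ 2 * real S * real A / \<epsilon> ^ 2"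
  shows "\<exists>M. valid_mdp S A H M \<and> measure_pmf.prob (alg_output M H alg n) {\<pi>. vstar M A H - pol_value M H \<pi> \<ge> \<epsilon>} \<ge> 1/20"
proof -
  define H' where "H' = H - 1"
  have HH: "H = Suc H'" and H': "0 < H'" using H2 by (auto simp: H'_def)
  have va: "valid_alg A (Suc H') alg" using va0 HH by simp
  have S: "2 < S" using S4 by simp
  have A: "0 < A" using A2 by simp
  have s8: "2 \<le> sqrt 8" by (rule real_le_rsqrt) simp
  have "48 * 2 \<le> 48 * sqrt 8" using s8 by simp
  then have q: "1 / (48 * sqrt 8) \<le> 1 / (48 * 2)" by (intro divide_left_mono) auto
  have e96: "\<epsilon> < 1/96" using e1 q by linarith
  define \<delta> where "\<delta> = 4 * \<epsilon> / real H'"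
  have H'1: "1 \<le> real H'" using H' by simp
  have d0: "0 \<le> \<delta>" using e0 by (simp add: \<delta>_def)
  have "\<delta> \<le> 4 * \<epsilon>" unfolding \<delta>_def using H'1 e0 by (simp add: divide_le_eq)
  then have d1: "\<delta> \<le> 1/4" using e96 by simp
  have Hd: "real H' * \<delta> = 4 * \<epsilon>" using H' by (simp add: \<delta>_def)
  have K: "K0 \<delta> \<le> 64 * \<epsilon>^2 / (real H')^2"
  proof -
    have "K0 \<delta> \<le> 4 * \<delta>^2" by (rule K0_bound[OF d0 d1])
    also have "\<dots> = 64 * \<epsilon>^2 / (real H')^2" by (simp add: \<delta>_def power_divide)
    finally show ?thesis .
  qed
  have HH2: "(real H)^2 \<le> 4 * (real H')^2"
  proof -
    have "real H \<le> 2 * real H'" using HH H'1 by simp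
    then have "(real H)^2 \<le> (2 * real H')^2" by (intro power_mono) auto
    then show ?thesis by (simp add: power_mult_distrib)
  qed
  have X: "real A * (real n * K0 \<delta> / real (S - 2)) \<le> (real A)^2 / 100"
  proof -
    have K0n: "0 \<le> K0 \<delta>" by (rule K0_nonneg[OF d0 d1])
    have "real n * K0 \<delta> \<le> (1/51200 * real H ^ 2 * real S * real A / \<epsilon> ^ 2) * (64 * \<epsilon>^2 / (real H')^2)"
      by (rule mult_mono[OF nb K]) (use K0n in auto)
    also have "\<dots> = 1/800 * real S * real A * ((real H)^2 / (real H')^2)"
      using e0 by (simp add: field_simps power2_eq_square)
    also have "\<dots> \<le> 1/800 * real S * real A * 4"
    proof -
      have "(real H)^2 / (real H')^2 \<le> 4" using HH2 H' by (simp add: divide_le_eq)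
      then show ?thesis by (intro mult_left_mono) auto
    qed
    finally have nk: "real n * K0 \<delta> \<le> real S * real A / 200" by (simp add: mult.commute)
    have S2: "real S \<le> 2 * real (S - 2)" using S4 S by (simp add: of_nat_diff)
    have Sp: "0 < real (S - 2)" using S by simp
    have "real n * K0 \<delta> / real (S - 2) \<le> (real S * real A / 200) / real (S - 2)"
      by (rule divide_right_mono[OF nk]) simp
    also have "\<dots> \<le> real A / 100"
      using S2 Sp A by (simp add: divide_le_eq field_simps)
    finally have "real n * K0 \<delta> / real (S - 2) \<le> real A / 100" .
    then have "real A * (real n * K0 \<delta> / real (S - 2)) \<le> real A * (real A / 100)"
      by (intro mult_left_mono) auto
    then show ?thesis by (simp add: power2_eq_square)
  qed
  have Bd: "(1 + 2 * sqrt (real A * (real n * K0 \<delta> / real (S - 2)))) / real A \<le> 7/10"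
  proof -
    have "sqrt (real A * (real n * K0 \<delta> / real (S - 2))) \<le> sqrt ((real A)^2 / 100)"
      by (rule real_sqrt_le_mono[OF X])
    also have "\<dots> = real A / 10" by (simp add: real_sqrt_divide)
    finally have sq: "sqrt (real A * (real n * K0 \<delta> / real (S - 2))) \<le> real A / 10" .
    have "(1 + 2 * sqrt (real A * (real n * K0 \<delta> / real (S - 2)))) / real A \<le> (1 + 2 * (real A / 10)) / real A"
      by (rule divide_right_mono) (use sq in auto)
    also have "\<dots> = 1 / real A + 1/5" using A by (simp add: field_simps)
    also have "\<dots> \<le> 1/2 + 1/5" using A2 by (simp add: divide_le_eq)
    finally show ?thesis by simp
  qed
  obtain \<theta> where th: "\<forall>s\<in>{2..<S}. \<theta> s < A"
    and W: "measure_pmf.expectation (alg_output (mdpB S (betaT \<delta> \<theta>)) (Suc H') alg n) (Gth \<theta> S) \<le> 7/10"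
    using core[OF va S H' d0 d1 A Bd] by blast
  let ?M = "mdpB S (betaT \<delta> \<theta>)"
  have sub: "{\<pi>. Gth \<theta> S \<pi> \<le> 3/4} \<subseteq> {\<pi>. vstar ?M A H - pol_value ?M H \<pi> \<ge> \<epsilon>}"
  proof
    fix \<pi> assume "\<pi> \<in> {\<pi>. Gth \<theta> S \<pi> \<le> 3/4}"
    then have G: "Gth \<theta> S \<pi> \<le> 3/4" by simp
    have "real H' * \<delta> * (1 - Gth \<theta> S \<pi>) \<le> vstar ?M A (Suc H') - pol_value ?M (Suc H') \<pi>"
      by (rule gap_bound[OF S d0 _ A]) (use d1 th in auto)
    moreover have "\<epsilon> \<le> real H' * \<delta> * (1 - Gth \<theta> S \<pi>)"
      unfolding Hd using G e0 by simp
    ultimately show "\<pi> \<in> {\<pi>. vstar ?M A H - pol_value ?M H \<pi> \<ge> \<epsilon>}" using HH by simp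
  qed
  have "1 - 4/3 * measure_pmf.expectation (alg_output ?M H alg n) (Gth \<theta> S) \<le> measure_pmf.prob (alg_output ?M H alg n) {\<pi>. Gth \<theta> S \<pi> \<le> 3/4}"
    by (rule markov_pmf) (use Gth_nonneg Gth_le1[OF S] in auto)
  also have "\<dots> \<le> measure_pmf.prob (alg_output ?M H alg n) {\<pi>. vstar ?M A H - pol_value ?M H \<pi> \<ge> \<epsilon>}"
    by (rule measure_pmf.finite_measure_mono[OF sub]) simp
  finally have "1 - 4/3 * (7/10) \<le> measure_pmf.prob (alg_output ?M H alg n) {\<pi>. vstar ?M A H - pol_value ?M H \<pi> \<ge> \<epsilon>}"
    using W HH by simp
  then show ?thesis
    using valid_mdp_mdpB[OF S, of A H "betaT \<delta> \<theta>"] by (intro exI[of _ ?M]) simp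
qed

theorem theoremE1:
  shows "\<exists>c1 c p :: real. c1 > 0 \<and> c > 0 \<and> p > 0 \<and>
    (\<forall>(H::nat) (A::nat) (S::nat) (\<epsilon>::real) (alg::algorithm) (n::nat).
       H \<ge> 2 \<longrightarrow> A \<ge> 2 \<longrightarrow> 0 < \<epsilon> \<longrightarrow> \<epsilon> < 1 / (48 * sqrt 8) \<longrightarrow>
       real S \<ge> c1 \<longrightarrow> valid_alg A H alg \<longrightarrow>
       real n \<le> c * real H ^ 2 * real S * real A / \<epsilon> ^ 2 \<longrightarrow>
       (\<exists>M. valid_mdp S A H M \<and>
          measure_pmf.prob (alg_output M H alg n)
            {\<pi>. vstar M A H - pol_value M H \<pi> \<ge> \<epsilon>} \<ge> p))"
  apply (rule exI[of _ 4], rule exI[of _ "1/51200"], rule exI[of _ "1/20"])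
  apply (intro conjI allI impI)
     prefer 4
     apply (rule main_core; assumption)
    apply simp_all
  done


end
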